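(* Let $C\in O_A^+(\mathbb{Z})$, $c_1,c_2\in\overline C_Q$ and $(z,\tau)\in D(c_1)\cap D(c_2)$. Then $C\cdot C_Q=C_Q$, $C\cdot S_Q=S_Q$, $(Cz,\tau)\in D(Cc_1)\cap D(Cc_2)$, and $$\theta^{Cc_1,Cc_2}(Cz;\tau)=\theta^{c_1,c_2}(z;\tau).$$
   Context: $A$ is a nondegenerate symmetric $r\times r$ integer matrix, $Q(x)=\frac12\langle x,Ax\rangle$, $B(x,y)=\langle x,Ay\rangle$, $Q$ of type $(r-1,1)$. Fix $c_0$ with $Q(c_0)<0$; $C_Q=\{c\in\mathbb{R}^r:Q(c)<0,B(c,c_0)<0\}$, $S_Q=\{c\in\mathbb{Z}^r\text{ primitive}:Q(c)=0,B(c,c_0)<0\}$, $\overline C_Q=C_Q\cup S_Q$. $O_A^+(\mathbb{R})=\{C\in\mathrm{GL}_r(\mathbb{R}):C^tAC=A,\ B(Cc,c)<0\ \forall c\in C_Q\}$, $O_A^+(\mathbb{Z})=O_A^+(\mathbb{R})\cap\mathrm{GL}_r(\mathbb{Z})$. $R(c)=\mathbb{R}^r$ for $c\in C_Q$, $R(c)=\{a:B(c,a)\notin\mathbb{Z}\}$ for $c\in S_Q$; $D(c)=\{(z,\tau)\in\mathbb{C}^r\times\mathbb{H}:\operatorname{Im}z/\operatorname{Im}\tau\in R(c)\}$. With $y=\operatorname{Im}\tau$, $E(z)=2\int_0^ze^{-\pi t^2}dt$: $\rho^c(\nu;\tau)=E(\frac{B(c,\nu)}{\sqrt{-Q(c)}}y^{1/2})$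 for $c\in C_Q$, $\operatorname{sign}(B(c,\nu))$ for $c\in S_Q$; $\rho^{c_1,c_2}=\rho^{c_1}-\rho^{c_2}$; $\theta^{c_1,c_2}(z;\tau)=\sum_{n\in\mathbb{Z}^r}\rho^{c_1,c_2}(n+a;\tau)e^{2\pi iQ(n)\tau+2\pi iB(n,z)}$ with $a=\operatorname{Im}z/\operatorname{Im}\tau$. *)

theory Defs
  imports "HOL-Analysis.Analysis"
begin

definition QF :: "real^'n^'n \<Rightarrow> real^'n \<Rightarrow> real" where
  "QF A x = (1/2) * (x \<bullet> (A *v x))"

definition BF :: "real^'n^'n \<Rightarrow> real^'n \<Rightarrow> real^'n \<Rightarrow> real" where
  "BF A x y = x \<bullet> (A *v y)"

text \<open>Q has type (r-1,1): by a real change of basis A becomes diagonal with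
  all diagonal entries nonzero, exactly one of them negative (Sylvester inertia).\<close>
definition lorentzian_type :: "real^'n^'n \<Rightarrow> bool" where
  "lorentzian_type A \<longleftrightarrow> (\<exists>(P::real^'n^'n) (d::'n \<Rightarrow> real). invertible P \<and>
      transpose P ** A ** P = (\<chi> i j. if i = j then d i else 0) \<and>
      (\<forall>i. d i \<noteq> 0) \<and> card {i. d i < 0} = 1)"

definition int_vec :: "real^'n \<Rightarrow> bool" where
  "int_vec c \<longleftrightarrow> (\<forall>i. c $ i \<in> \<int>)"

definition primitive_vec :: "real^'n \<Rightarrow> bool" where
  "primitive_vec c \<longleftrightarrow> int_vec c \<and>
     (\<forall>(m::int) w. int_vec w \<and> c = of_int m *\<^sub>R w \<longrightarrow> \<bar>m\<bar> = 1)"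

definition CQ :: "real^'n^'n \<Rightarrow> real^'n \<Rightarrow> (real^'n) set" where
  "CQ A c0 = {c. QF A c < 0 \<and> BF A c c0 < 0}"

definition SQ :: "real^'n^'n \<Rightarrow> real^'n \<Rightarrow> (real^'n) set" where
  "SQ A c0 = {c. primitive_vec c \<and> QF A c = 0 \<and> BF A c c0 < 0}"

definition CQbar :: "real^'n^'n \<Rightarrow> real^'n \<Rightarrow> (real^'n) set" where
  "CQbar A c0 = CQ A c0 \<union> SQ A c0"

definition OA_plus_R :: "real^'n^'n \<Rightarrow> real^'n \<Rightarrow> (real^'n^'n) set" where
  "OA_plus_R A c0 = {C. invertible C \<and> transpose C ** A ** C = A \<and>
       (\<forall>c\<in>CQ A c0. BF A (C *v c) c < 0)}"

definition OA_plus_Z :: "real^'n^'n \<Rightarrow> real^'n \<Rightarrow> (real^'n^'n) set" where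
  "OA_plus_Z A c0 = {C \<in> OA_plus_R A c0. (\<forall>i j. C $ i $ j \<in> \<int>) \<and>
       (\<forall>i j. matrix_inv C $ i $ j \<in> \<int>)}"

text \<open>R(c); only meaningful for c in the closed cone (empty otherwise).\<close>
definition Rset :: "real^'n^'n \<Rightarrow> real^'n \<Rightarrow> real^'n \<Rightarrow> (real^'n) set" where
  "Rset A c0 c = {a. c \<in> CQ A c0 \<or> (c \<in> SQ A c0 \<and> BF A c a \<notin> \<int>)}"

definition Imv :: "complex^'n \<Rightarrow> real^'n" where
  "Imv z = (\<chi> i. Im (z $ i))"

definition Dset :: "real^'n^'n \<Rightarrow> real^'n \<Rightarrow> real^'n \<Rightarrow> ((complex^'n) \<times> complex) set" where
  "Dset A c0 c = {(z, \<tau>). Im \<tau> > 0 \<and> (1 / Im \<tau>) *\<^sub>R Imv z \<in> Rset A c0 c}"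

definition Efun :: "real \<Rightarrow> real" where
  "Efun x = 2 * (if 0 \<le> x then integral {0..x} (\<lambda>t. exp (- pi * t\<^sup>2))
                 else - integral {x..0} (\<lambda>t. exp (- pi * t\<^sup>2)))"

definition rho :: "real^'n^'n \<Rightarrow> real^'n \<Rightarrow> real^'n \<Rightarrow> real^'n \<Rightarrow> complex \<Rightarrow> real" where
  "rho A c0 c \<nu> \<tau> =
     (if c \<in> CQ A c0 then Efun (BF A c \<nu> / sqrt (- QF A c) * sqrt (Im \<tau>))
      else if c \<in> SQ A c0 then sgn (BF A c \<nu>) else 0)"

definition rho2 :: "real^'n^'n \<Rightarrow> real^'n \<Rightarrow> real^'n \<Rightarrow> real^'n \<Rightarrow> real^'n \<Rightarrow> complex \<Rightarrow> real" where
  "rho2 A c0 c1 c2 \<nu> \<tau> = rho A c0 c1 \<nu> \<tau> - rho A c0 c2 \<nu> \<tau>"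

definition rvec_of_int :: "int^'n \<Rightarrow> real^'n" where
  "rvec_of_int n = (\<chi> i. of_int (n $ i))"

definition BFc :: "real^'n^'n \<Rightarrow> real^'n \<Rightarrow> complex^'n \<Rightarrow> complex" where
  "BFc A x z = (\<Sum>i\<in>UNIV. \<Sum>j\<in>UNIV. complex_of_real (x $ i * A $ i $ j) * z $ j)"

definition cmat_vec :: "real^'n^'n \<Rightarrow> complex^'n \<Rightarrow> complex^'n" where
  "cmat_vec C z = (\<chi> i. \<Sum>j\<in>UNIV. complex_of_real (C $ i $ j) * z $ j)"

definition theta :: "real^'n^'n \<Rightarrow> real^'n \<Rightarrow> real^'n \<Rightarrow> real^'n \<Rightarrow> complex^'n \<Rightarrow> complex \<Rightarrow> complex" where
  "theta A c0 c1 c2 z \<tau> =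
     (let a = (1 / Im \<tau>) *\<^sub>R Imv z in
      infsum (\<lambda>n::int^'n.
         complex_of_real (rho2 A c0 c1 c2 (rvec_of_int n + a) \<tau>) *
         exp (2 * pi * \<i> * complex_of_real (QF A (rvec_of_int n)) * \<tau>
              + 2 * pi * \<i> * BFc A (rvec_of_int n) z)) UNIV)"

end

theory Submission
  imports Defs
begin


lemma inner_mat_left: "(C *v x) \<bullet> w = x \<bullet> (transpose C *v (w::real^'n))"
  by (metis dot_lmul_matrix inner_commute transpose_matrix_vector)

lemma BF_sym: "transpose A = A \<Longrightarrow> BF A x y = BF A y x"
  unfolding BF_def by (metis inner_mat_left inner_commute)

lemma BF_C: "transpose C ** A ** C = A \<Longrightarrow> BF A (C *v x) (C *v y) = BF A x y"
  unfolding BF_def by (simp add: inner_mat_left matrix_vector_mul_assoc matrix_mul_assoc)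

lemma QF_BF: "QF A x = BF A x x / 2"
  unfolding QF_def BF_def by simp

lemma BF_add1: "BF A (x + y) z = BF A x z + BF A y z"
  unfolding BF_def by (simp add: inner_add_left)
lemma BF_add2: "BF A z (x + y) = BF A z x + BF A z y"
  unfolding BF_def by (simp add: inner_add_right matrix_vector_right_distrib)
lemma BF_scale1: "BF A (t *\<^sub>R x) z = t * BF A x z"
  unfolding BF_def by simp
lemma BF_scale2: "BF A z (t *\<^sub>R x) = t * BF A z x"
  unfolding BF_def by (simp add: matrix_vector_mult_scaleR)
lemma BF_diff1: "BF A (x - y) z = BF A x z - BF A y z"
  unfolding BF_def by (simp add: inner_diff_left)
lemma BF_diff2: "BF A z (x - y) = BF A z x - BF A z y"
  unfolding BF_def by (simp add: inner_diff_right matrix_vector_mult_diff_distrib)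
lemma BF_neg1: "BF A (-x) z = - BF A x z"
  unfolding BF_def by simp
lemma BF_neg2: "BF A z (-x) = - BF A z x"
  using BF_diff2[of A z 0 x] by (simp add: BF_def)

lemma matrix_inv_props:
  assumes "invertible (C::real^'n^'n)"
  shows "C ** matrix_inv C = mat 1" "matrix_inv C ** C = mat 1"
  using someI_ex[OF assms[unfolded invertible_def]] unfolding matrix_inv_def by auto

lemma QF_comb:
  assumes "transpose A = A"
  shows "QF A (a *\<^sub>R y + b *\<^sub>R w) = a^2 * QF A y + a * b * BF A y w + b^2 * QF A w"
  using BF_sym[OF assms, of w y]
  by (simp add: QF_BF BF_add1 BF_add2 BF_scale1 BF_scale2 power2_eq_square algebra_simps)

lemma QF_mat: "QF A (P *v u) = QF (transpose P ** A ** P) u"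
  unfolding QF_def by (simp add: inner_mat_left matrix_vector_mul_assoc matrix_mul_assoc)

lemma QF_diag: "QF (\<chi> i j. if i = j then d i else 0) u = (1/2) * (\<Sum>i\<in>UNIV. d i * (u$i)^2)"
proof -
  have "(\<chi> i j. if i = j then d i else 0) *v u = (\<chi> i. d i * u$i)"
  proof -
    have "(if i = j then d i else 0) * u$j = (if i = j then d i * u$j else 0)" for i j :: 'a by simp
    thus ?thesis by (simp add: matrix_vector_mult_def vec_eq_iff)
  qed
  thus ?thesis unfolding QF_def by (simp add: inner_vec_def power2_eq_square algebra_simps)
qed

lemma lorentz_key:
  assumes sym: "transpose A = A" and lor: "lorentzian_type A"
    and y: "QF A y < 0" and yw: "BF A y w = 0" and w: "QF A w \<le> 0"
  shows "w = 0"
proof -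
  obtain P :: "real^'a^'a" and d where P: "invertible P"
    and diag: "transpose P ** A ** P = (\<chi> i j. if i = j then d i else 0)"
    and dnz: "\<forall>i. d i \<noteq> 0" and card: "card {i. d i < 0} = 1"
    using lor unfolding lorentzian_type_def by blast
  obtain k where k: "{i. d i < 0} = {k}" using card card_1_singletonE by blast
  have dpos: "i \<noteq> k \<Longrightarrow> d i > 0" for i using k dnz by (metis (mono_tags) insertI1 linorder_neqE_linordered_idom mem_Collect_eq singletonD)
  define Pi where "Pi = matrix_inv P"
  have PPi: "P *v (Pi *v v) = v" for v
    using matrix_inv_props(1)[OF P] by (simp add: Pi_def matrix_vector_mul_assoc)
  have nonneg: "QF A v \<ge> 0 \<and> (QF A v = 0 \<longrightarrow> v = 0)" if vk: "(Pi *v v)$k = 0" for v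
  proof -
    define u where "u = Pi *v v"
    have Qv: "QF A v = (1/2) * (\<Sum>i\<in>UNIV. d i * (u$i)^2)"
      using QF_mat[of A P u] PPi[of v] by (simp add: diag QF_diag u_def)
    have tn: "\<forall>i\<in>UNIV. d i * (u$i)^2 \<ge> 0"
      using dpos vk u_def by (metis mult_nonneg_nonneg order_less_imp_le power_zero_numeral zero_le_power2 mult_zero_right)
    hence "(\<Sum>i\<in>UNIV. d i * (u$i)^2) \<ge> 0" by (simp add: sum_nonneg)
    moreover have "QF A v = 0 \<longrightarrow> v = 0"
    proof
      assume "QF A v = 0"
      hence "(\<Sum>i\<in>UNIV. d i * (u$i)^2) = 0" using Qv by simp
      hence "\<forall>i\<in>UNIV. d i * (u$i)^2 = 0" using tn by (simp add: sum_nonneg_eq_0_iff)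
      hence "u = 0" using dnz by (simp add: vec_eq_iff)
      thus "v = 0" using PPi[of v] u_def by simp
    qed
    ultimately show ?thesis using Qv by simp
  qed
  define a where "a = (Pi *v w)$k"
  define b where "b = - (Pi *v y)$k"
  define v where "v = a *\<^sub>R y + b *\<^sub>R w"
  have "(Pi *v v)$k = 0"
    by (simp add: v_def a_def b_def matrix_vector_right_distrib matrix_vector_mult_scaleR matrix_vector_mult_diff_distrib)
  from nonneg[OF this] have nv: "QF A v \<ge> 0" "QF A v = 0 \<longrightarrow> v = 0" by auto
  have Qv: "QF A v = a^2 * QF A y + b^2 * QF A w"
    unfolding v_def QF_comb[OF sym] yw by simp
  have b2: "b^2 * QF A w \<le> 0" using w by (simp add: mult_nonneg_nonpos)
  have a2: "a^2 * QF A y \<le> 0" using y by (simp add: mult_nonneg_nonpos)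
  have "a^2 * QF A y = 0" using nv(1) Qv a2 b2 by linarith
  hence a0: "a = 0" using y by simp
  have "QF A v = 0" using nv(1) Qv a2 b2 by linarith
  hence "b *\<^sub>R w = 0" using nv(2) a0 v_def by simp
  moreover have "b \<noteq> 0"
  proof
    assume "b = 0"
    hence "(Pi *v y)$k = 0" using b_def by simp
    from nonneg[OF this] y show False by simp
  qed
  ultimately show "w = 0" by simp
qed

lemma mat_neg: "(C::real^'n^'m) *v (-x) = - (C *v x)"
  by (metis matrix_vector_mult_diff_distrib matrix_vector_mult_0_right diff_0)

lemma QF_C: "transpose C ** A ** C = A \<Longrightarrow> QF A (C *v x) = QF A x"
  by (simp add: QF_BF BF_C)

lemma QF_zero[simp]: "QF A 0 = 0" by (simp add: QF_def)

lemma timelike_nonorth: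
  assumes "transpose A = A" "lorentzian_type A" "QF A x < 0" "QF A y < 0"
  shows "BF A y x \<noteq> 0"
  using lorentz_key[OF assms(1,2,4), of x] assms(3) by fastforce

lemma timelike_trans:
  assumes sym: "transpose A = A" and lor: "lorentzian_type A"
    and "QF A y < 0" "QF A x < 0" "QF A z < 0" "BF A x y < 0" "BF A z y < 0"
  shows "BF A x z < 0"
proof -
  define l where "l = BF A z y / BF A x y"
  have l: "l > 0" using assms(6,7) by (simp add: l_def divide_neg_neg)
  define v where "v = 1 *\<^sub>R z + (-l) *\<^sub>R x"
  have "BF A y v = 0"
    using assms(6) BF_sym[OF sym, of x y] BF_sym[OF sym, of z y]
    by (simp add: v_def BF_add2 BF_diff2 BF_scale2 l_def)
  hence "QF A v \<ge> 0" using lorentz_key[OF sym lor assms(3), of v] by force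
  moreover have "QF A v = QF A z - l * BF A z x + l^2 * QF A x"
    unfolding v_def QF_comb[OF sym] by (simp add: power2_eq_square)
  ultimately have "l * BF A z x < 0" using assms(4,5) l
    by (smt (verit) mult_pos_neg zero_less_power)
  hence "BF A z x < 0" using l by (simp add: mult_less_0_iff)
  thus ?thesis using BF_sym[OF sym] by metis
qed

lemma int_vec_mult:
  assumes "\<forall>i j. M $ i $ j \<in> \<int>" "int_vec x" shows "int_vec (M *v x)"
  using assms unfolding int_vec_def matrix_vector_mult_def by (auto intro!: Ints_sum Ints_mult)

lemma OAZ_props:
  assumes "C \<in> OA_plus_Z A c0"
  shows "invertible C" "transpose C ** A ** C = A" "\<forall>c\<in>CQ A c0. BF A (C *v c) c < 0"
    "\<forall>i j. C $ i $ j \<in> \<int>" "\<forall>i j. matrix_inv C $ i $ j \<in> \<int>"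
    "C *v (matrix_inv C *v x) = x" "matrix_inv C *v (C *v x) = x"
  using assms unfolding OA_plus_Z_def OA_plus_R_def apply auto
  using matrix_inv_props[of C] by (auto simp: matrix_vector_mul_assoc)

lemma CQ_map:
  assumes sym: "transpose A = A" and lor: "lorentzian_type A" and c0: "QF A c0 < 0"
    and C: "C \<in> OA_plus_Z A c0" and c: "c \<in> CQ A c0"
  shows "C *v c \<in> CQ A c0"
proof -
  note Cp = OAZ_props[OF C]
  have q: "QF A (C *v c) < 0" using c QF_C[OF Cp(2)] by (simp add: CQ_def)
  have "BF A (C *v c) c0 < 0"
    apply (rule timelike_trans[OF sym lor, of c])
    using c Cp(3) q c0 BF_sym[OF sym, of c0 c] by (auto simp: CQ_def)
  thus ?thesis using q by (simp add: CQ_def)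
qed

lemma CQ_image:
  assumes sym: "transpose A = A" and lor: "lorentzian_type A" and c0: "QF A c0 < 0"
    and C: "C \<in> OA_plus_Z A c0"
  shows "(\<lambda>c. C *v c) ` CQ A c0 = CQ A c0"
proof
  show "(\<lambda>c. C *v c) ` CQ A c0 \<subseteq> CQ A c0" using CQ_map[OF assms] by auto
next
  note Cp = OAZ_props[OF C]
  show "CQ A c0 \<subseteq> (\<lambda>c. C *v c) ` CQ A c0"
  proof
    fix c assume c: "c \<in> CQ A c0"
    define d where "d = matrix_inv C *v c"
    have Cd: "C *v d = c" using Cp(6) d_def by simp
    have qd: "QF A d < 0" using c QF_C[OF Cp(2), of d] Cd by (simp add: CQ_def)
    have "BF A d c0 \<noteq> 0" using timelike_nonorth[OF sym lor c0 qd] BF_sym[OF sym] by metis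
    moreover have "\<not> BF A d c0 > 0"
    proof
      assume "BF A d c0 > 0"
      hence "-d \<in> CQ A c0" using qd by (simp add: CQ_def BF_neg1 BF_neg2 QF_BF)
      from CQ_map[OF assms this] have "- c \<in> CQ A c0" using Cd by (simp add: mat_neg)
      thus False using c by (simp add: CQ_def BF_neg1)
    qed
    ultimately have "d \<in> CQ A c0" using qd by (simp add: CQ_def)
    thus "c \<in> (\<lambda>c. C *v c) ` CQ A c0" using Cd by force
  qed
qed


lemma primitive_nz: "primitive_vec c \<Longrightarrow> c \<noteq> 0"
proof
  assume "primitive_vec c" "c = 0"
  hence h: "\<forall>(m::int) w. int_vec w \<and> c = of_int m *\<^sub>R w \<longrightarrow> \<bar>m\<bar> = 1" and "c = 0"
    unfolding primitive_vec_def by auto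
  have "int_vec (0::real^'a)" by (simp add: int_vec_def)
  hence "\<bar>2::int\<bar> = 1" using spec[OF spec[OF h, of 2], of 0] \<open>c = 0\<close> by simp
  thus False by simp
qed

lemma primitive_transfer:
  assumes M: "\<forall>i j. M $ i $ j \<in> \<int>" and N: "\<forall>i j. N $ i $ j \<in> \<int>"
    and NM: "\<And>x. N *v (M *v x) = x" and p: "primitive_vec c"
  shows "primitive_vec (M *v c)"
  unfolding primitive_vec_def
proof (intro conjI allI impI)
  show "int_vec (M *v c)" using int_vec_mult[OF M] p primitive_vec_def by blast
  fix m :: int and w assume h: "int_vec w \<and> M *v c = of_int m *\<^sub>R w"
  hence "c = of_int m *\<^sub>R (N *v w)" using NM[of c] by (simp add: matrix_vector_mult_scaleR)
  moreover have "int_vec (N *v w)" using int_vec_mult[OF N] h by blast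
  ultimately show "\<bar>m\<bar> = 1" using p unfolding primitive_vec_def by blast
qed

lemma primitive_neg: "primitive_vec c \<Longrightarrow> primitive_vec (-c)"
  unfolding primitive_vec_def
proof (intro conjI allI impI)
  assume p: "int_vec c \<and> (\<forall>(m::int) w. int_vec w \<and> c = of_int m *\<^sub>R w \<longrightarrow> \<bar>m\<bar> = 1)"
  show "int_vec (-c)" using p by (simp add: int_vec_def)
  fix m :: int and w assume h: "int_vec w \<and> -c = of_int m *\<^sub>R w"
  hence e: "-c = of_int m *\<^sub>R w" by blast
  have "c = - (of_int m *\<^sub>R w)" unfolding e[symmetric] by simp
  hence "c = of_int (-m) *\<^sub>R w" by simp
  hence "\<bar>-m\<bar> = 1" using p h by blast
  thus "\<bar>m\<bar> = 1" by simp
qed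

lemma SQ_map:
  assumes sym: "transpose A = A" and lor: "lorentzian_type A" and c0: "QF A c0 < 0"
    and C: "C \<in> OA_plus_Z A c0" and c: "c \<in> SQ A c0"
  shows "C *v c \<in> SQ A c0"
proof -
  note Cp = OAZ_props[OF C]
  have p: "primitive_vec (C *v c)"
    using primitive_transfer[OF Cp(4) Cp(5) Cp(7)] c by (simp add: SQ_def)
  have q: "QF A (C *v c) = 0" using c QF_C[OF Cp(2)] by (simp add: SQ_def)
  have lin: "BF A (C *v c) c0 + e * BF A (C *v c0) c0 < 0" if e: "e > 0" for e
  proof -
    have "c + e *\<^sub>R c0 \<in> CQ A c0"
    proof -
      have "QF A (1 *\<^sub>R c + e *\<^sub>R c0) = QF A c + e * BF A c c0 + e^2 * QF A c0"
        unfolding QF_comb[OF sym] by simp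
      moreover have "e * BF A c c0 < 0" using c e by (simp add: SQ_def mult_pos_neg)
      moreover have "e^2 * QF A c0 < 0" using e c0 by (simp add: mult_pos_neg)
      moreover have "BF A (c + e *\<^sub>R c0) c0 = BF A c c0 + e * (2 * QF A c0)"
        by (simp add: BF_add1 BF_scale1 QF_BF)
      moreover have "e * (2 * QF A c0) < 0" using e c0 by (simp add: mult_pos_neg)
      ultimately show ?thesis using c by (simp add: CQ_def SQ_def)
    qed
    from CQ_map[OF sym lor c0 C this] show ?thesis
      by (simp add: CQ_def matrix_vector_right_distrib matrix_vector_mult_scaleR BF_add1 BF_scale1)
  qed
  have le: "BF A (C *v c) c0 \<le> 0"
  proof (rule ccontr)
    define a where "a = BF A (C *v c) c0"
    define b where "b = BF A (C *v c0) c0"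
    assume "\<not> BF A (C *v c) c0 \<le> 0"
    hence a: "a > 0" by (simp add: a_def)
    define e where "e = a / (2 * \<bar>b\<bar> + 1)"
    have e: "e > 0" using a by (simp add: e_def)
    have "e * \<bar>b\<bar> < a"
    proof -
      have "e * \<bar>b\<bar> = a * (\<bar>b\<bar> / (2 * \<bar>b\<bar> + 1))" by (simp add: e_def)
      also have "\<dots> < a * 1" using a by (intro mult_strict_left_mono) auto
      finally show ?thesis by simp
    qed
    moreover have "e * b \<ge> - \<bar>e * b\<bar>" by simp
    moreover have "\<bar>e * b\<bar> = e * \<bar>b\<bar>" using e by (simp add: abs_mult)
    ultimately have "a + e * b \<ge> 0" by linarith
    thus False using lin[OF e] by (simp add: a_def b_def)
  qed
  have "BF A (C *v c) c0 \<noteq> 0"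
  proof
    assume "BF A (C *v c) c0 = 0"
    hence "BF A c0 (C *v c) = 0" using BF_sym[OF sym] by metis
    from lorentz_key[OF sym lor c0 this] q have "C *v c = 0" by simp
    hence "c = 0" using Cp(7)[of c] by simp
    thus False using c primitive_nz by (auto simp: SQ_def)
  qed
  with le p q show ?thesis by (simp add: SQ_def)
qed

lemma SQ_image:
  assumes sym: "transpose A = A" and lor: "lorentzian_type A" and c0: "QF A c0 < 0"
    and C: "C \<in> OA_plus_Z A c0"
  shows "(\<lambda>c. C *v c) ` SQ A c0 = SQ A c0"
proof
  show "(\<lambda>c. C *v c) ` SQ A c0 \<subseteq> SQ A c0" using SQ_map[OF assms] by auto
next
  note Cp = OAZ_props[OF C]
  show "SQ A c0 \<subseteq> (\<lambda>c. C *v c) ` SQ A c0"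
  proof
    fix c assume c: "c \<in> SQ A c0"
    define d where "d = matrix_inv C *v c"
    have Cd: "C *v d = c" using Cp(6) d_def by simp
    have qd: "QF A d = 0" using c QF_C[OF Cp(2), of d] Cd by (simp add: SQ_def)
    have pd: "primitive_vec d"
      using primitive_transfer[OF Cp(5) Cp(4) Cp(6)] c by (simp add: SQ_def d_def)
    have "BF A d c0 \<noteq> 0"
    proof
      assume "BF A d c0 = 0"
      hence "BF A c0 d = 0" using BF_sym[OF sym] by metis
      from lorentz_key[OF sym lor c0 this] qd have "d = 0" by simp
      thus False using pd primitive_nz by auto
    qed
    moreover have "\<not> BF A d c0 > 0"
    proof
      assume "BF A d c0 > 0"
      hence "-d \<in> SQ A c0" using qd pd primitive_neg by (simp add: SQ_def BF_neg1 BF_neg2 QF_BF)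
      from SQ_map[OF assms this] have "- c \<in> SQ A c0" using Cd by (simp add: mat_neg)
      thus False using c by (simp add: SQ_def BF_neg1)
    qed
    ultimately have "d \<in> SQ A c0" using qd pd by (simp add: SQ_def)
    thus "c \<in> (\<lambda>c. C *v c) ` SQ A c0" using Cd by force
  qed
qed



definition Rev :: "complex^'n \<Rightarrow> real^'n" where
  "Rev z = (\<chi> i. Re (z $ i))"

lemma Imv_cmat: "Imv (cmat_vec C z) = C *v Imv z"
  by (simp add: Imv_def cmat_vec_def matrix_vector_mult_def vec_eq_iff Im_sum)

lemma Rev_cmat: "Rev (cmat_vec C z) = C *v Rev z"
  by (simp add: Rev_def cmat_vec_def matrix_vector_mult_def vec_eq_iff Re_sum)

lemma BFc_Re: "Re (BFc A x z) = BF A x (Rev z)"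
  by (simp add: BFc_def BF_def Rev_def inner_vec_def matrix_vector_mult_def Re_sum sum_distrib_left mult.assoc)

lemma BFc_Im: "Im (BFc A x z) = BF A x (Imv z)"
  by (simp add: BFc_def BF_def Imv_def inner_vec_def matrix_vector_mult_def Im_sum sum_distrib_left mult.assoc)

lemma BFc_C: "transpose C ** A ** C = A \<Longrightarrow> BFc A (C *v x) (cmat_vec C z) = BFc A x z"
  by (rule complex_eqI) (simp_all add: BFc_Re BFc_Im Rev_cmat Imv_cmat BF_C)

lemma rho_C:
  assumes sym: "transpose A = A" and lor: "lorentzian_type A" and c0: "QF A c0 < 0"
    and C: "C \<in> OA_plus_Z A c0" and c: "c \<in> CQbar A c0"
  shows "rho A c0 (C *v c) (C *v \<nu>) \<tau> = rho A c0 c \<nu> \<tau>"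
proof -
  note Cp = OAZ_props[OF C]
  show ?thesis
  proof (cases "c \<in> CQ A c0")
    case True
    then show ?thesis using CQ_map[OF sym lor c0 C True]
      by (simp add: rho_def QF_C[OF Cp(2)] BF_C[OF Cp(2)])
  next
    case False
    hence cS: "c \<in> SQ A c0" using c by (simp add: CQbar_def)
    have CS: "C *v c \<in> SQ A c0" using SQ_map[OF sym lor c0 C cS] .
    have "C *v c \<notin> CQ A c0" using CS by (simp add: CQ_def SQ_def)
    then show ?thesis using False cS CS
      by (simp add: rho_def BF_C[OF Cp(2)])
  qed
qed

lemma Rset_C:
  assumes sym: "transpose A = A" and lor: "lorentzian_type A" and c0: "QF A c0 < 0"
    and C: "C \<in> OA_plus_Z A c0" and a: "a \<in> Rset A c0 c"
  shows "C *v a \<in> Rset A c0 (C *v c)"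
  using a CQ_map[OF sym lor c0 C, of c] SQ_map[OF sym lor c0 C, of c] BF_C[OF OAZ_props(2)[OF C]]
  by (auto simp: Rset_def)

lemma Dset_C:
  assumes sym: "transpose A = A" and lor: "lorentzian_type A" and c0: "QF A c0 < 0"
    and C: "C \<in> OA_plus_Z A c0" and d: "(z, \<tau>) \<in> Dset A c0 c"
  shows "(cmat_vec C z, \<tau>) \<in> Dset A c0 (C *v c)"
  using d Rset_C[OF sym lor c0 C, of "(1 / Im \<tau>) *\<^sub>R Imv z" c]
  by (simp add: Dset_def Imv_cmat matrix_vector_mult_scaleR)

lemma int_vec_rvec: "int_vec (rvec_of_int m)"
  by (simp add: int_vec_def rvec_of_int_def)

definition ivec_of :: "real^'n \<Rightarrow> int^'n" where
  "ivec_of x = (\<chi> i. \<lfloor>x $ i\<rfloor>)"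

lemma rvec_ivec: "int_vec x \<Longrightarrow> rvec_of_int (ivec_of x) = x"
  by (auto simp: int_vec_def rvec_of_int_def ivec_of_def vec_eq_iff elim!: Ints_cases)

lemma ivec_rvec: "ivec_of (rvec_of_int m) = m"
  by (simp add: rvec_of_int_def ivec_of_def vec_eq_iff)

lemma theta_C:
  assumes sym: "transpose A = A" and lor: "lorentzian_type A" and c0: "QF A c0 < 0"
    and C: "C \<in> OA_plus_Z A c0" and c1: "c1 \<in> CQbar A c0" and c2: "c2 \<in> CQbar A c0"
  shows "theta A c0 (C *v c1) (C *v c2) (cmat_vec C z) \<tau> = theta A c0 c1 c2 z \<tau>"
proof -
  note Cp = OAZ_props[OF C]
  define g where "g m = ivec_of (C *v rvec_of_int m)" for m :: "int^'a"
  define h where "h m = ivec_of (matrix_inv C *v rvec_of_int m)" for m :: "int^'a"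
  have rg: "rvec_of_int (g m) = C *v rvec_of_int m" for m
    unfolding g_def by (rule rvec_ivec[OF int_vec_mult[OF Cp(4) int_vec_rvec]])
  have rh: "rvec_of_int (h m) = matrix_inv C *v rvec_of_int m" for m
    unfolding h_def by (rule rvec_ivec[OF int_vec_mult[OF Cp(5) int_vec_rvec]])
  have hg: "h (g m) = m" for m
    using arg_cong[where f=ivec_of, OF rh[of "g m"]] by (simp add: rg Cp(7) ivec_rvec)
  have gh: "g (h m) = m" for m
    using arg_cong[where f=ivec_of, OF rg[of "h m"]] by (simp add: rh Cp(6) ivec_rvec)
  have bij: "bij_betw g UNIV UNIV"
    by (rule bij_betw_byWitness[where f'=h]) (auto simp: hg gh)
  define a where "a = (1 / Im \<tau>) *\<^sub>R Imv z"
  have a': "(1 / Im \<tau>) *\<^sub>R Imv (cmat_vec C z) = C *v a"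
    by (simp add: a_def Imv_cmat matrix_vector_mult_scaleR)
  define F where "F n = complex_of_real (rho2 A c0 (C *v c1) (C *v c2) (rvec_of_int n + C *v a) \<tau>) *
         exp (2 * pi * \<i> * complex_of_real (QF A (rvec_of_int n)) * \<tau>
              + 2 * pi * \<i> * BFc A (rvec_of_int n) (cmat_vec C z))" for n
  define G where "G n = complex_of_real (rho2 A c0 c1 c2 (rvec_of_int n + a) \<tau>) *
         exp (2 * pi * \<i> * complex_of_real (QF A (rvec_of_int n)) * \<tau>
              + 2 * pi * \<i> * BFc A (rvec_of_int n) z)" for n
  have FG: "F (g m) = G m" for m
  proof -
    have "rvec_of_int (g m) + C *v a = C *v (rvec_of_int m + a)"
      by (simp add: rg matrix_vector_right_distrib)
    thus ?thesis
      by (simp add: F_def G_def rho2_def rho_C[OF sym lor c0 C c1] rho_C[OF sym lor c0 C c2]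
          rg QF_C[OF Cp(2)] BFc_C[OF Cp(2)])
  qed
  have "theta A c0 (C *v c1) (C *v c2) (cmat_vec C z) \<tau> = infsum F UNIV"
    unfolding theta_def Let_def a' F_def by simp
  also have "\<dots> = infsum (\<lambda>m. F (g m)) UNIV"
    by (rule infsum_reindex_bij_betw[OF bij, symmetric])
  also have "\<dots> = infsum G UNIV" by (simp add: FG)
  also have "\<dots> = theta A c0 c1 c2 z \<tau>"
    unfolding theta_def Let_def G_def a_def by simp
  finally show ?thesis .
qed

theorem proposition2p13:
  fixes A C :: "real^'n^'n" and c0 c1 c2 :: "real^'n"
    and z :: "complex^'n" and \<tau> :: complex
  assumes "\<forall>i j. A $ i $ j \<in> \<int>"
    and "transpose A = A"
    and "det A \<noteq> 0"
    and "lorentzian_type A"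
    and "QF A c0 < 0"
    and "C \<in> OA_plus_Z A c0"
    and "c1 \<in> CQbar A c0" and "c2 \<in> CQbar A c0"
    and "(z, \<tau>) \<in> Dset A c0 c1 \<inter> Dset A c0 c2"
  shows "(\<lambda>c. C *v c) ` CQ A c0 = CQ A c0 \<and>
         (\<lambda>c. C *v c) ` SQ A c0 = SQ A c0 \<and>
         (cmat_vec C z, \<tau>) \<in> Dset A c0 (C *v c1) \<inter> Dset A c0 (C *v c2) \<and>
         theta A c0 (C *v c1) (C *v c2) (cmat_vec C z) \<tau> = theta A c0 c1 c2 z \<tau>"
  using CQ_image[OF assms(2,4,5,6)] SQ_image[OF assms(2,4,5,6)]
    Dset_C[OF assms(2,4,5,6)] theta_C[OF assms(2,4,5,6,7,8)] assms(9)
  by blast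

end
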